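(* Assume (A1) and (B2), and let $b_n$ be random vectors with $\|b_n-b\|=O_{\mathbb P}(r_n^{-1})$ for a deterministic sequence $r_n\to\infty$. Then $$d_H\big(OPT(b_n),OPT(b)\big)=O_{\mathbb P}(r_n^{-1}),$$ where $d_H(S,T)=\max\{\sup_{x\in S}\inf_{y\in T}\|x-y\|,\ \sup_{x\in T}\inf_{y\in S}\|x-y\|\}$ is the Hausdorff distance.
   Context: $A\in\mathbb{R}^{m\times d}$ has full rank $m\le d$, $b\in\mathbb{R}^m$, $c\in\mathbb{R}^d$. For $\beta\in\mathbb{R}^m$, $(\mathrm{P}_\beta)$ is $\min c^Tx$ s.t. $Ax=\beta$, $x\ge0$, and $OPT(\beta)$ is its set of optimal solutions. (A1): $OPT(b)$ is non-empty and bounded. (B2): $\mathbb{P}((\mathrm{P}_{b_n})\text{ has an optimal solution})\to1$. *)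

theory Defs
  imports "HOL-Analysis.Analysis" "HOL-Probability.Probability"
begin

definition OPT :: "real^'d^'m \<Rightarrow> real^'d \<Rightarrow> real^'m \<Rightarrow> (real^'d) set" where
  "OPT A c \<beta> = {x. A *v x = \<beta> \<and> (\<forall>i. 0 \<le> x $ i) \<and>
      (\<forall>y. A *v y = \<beta> \<and> (\<forall>i. 0 \<le> y $ i) \<longrightarrow> c \<bullet> x \<le> c \<bullet> y)}"

text \<open>Hausdorff distance as in the paper, with values in the extended reals
  (sup over the empty set is -infinity, inf over the empty set is +infinity).\<close>
definition hausdorff_dist :: "'a::metric_space set \<Rightarrow> 'a set \<Rightarrow> ereal" where
  "hausdorff_dist S T = max (SUP x\<in>S. INF y\<in>T. ereal (dist x y))
                             (SUP x\<in>T. INF y\<in>S. ereal (dist x y))"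

text \<open>X n = O_P(1 / r n): stochastically bounded after scaling by r n.
  Probabilities of possibly non-measurable events are taken as outer probabilities.\<close>
definition bigO_P :: "'w measure \<Rightarrow> (nat \<Rightarrow> 'w \<Rightarrow> ereal) \<Rightarrow> (nat \<Rightarrow> real) \<Rightarrow> bool" where
  "bigO_P M X r \<longleftrightarrow> (\<forall>\<epsilon>>0. \<exists>K::real. \<exists>N. \<forall>n\<ge>N. \<exists>E\<in>sets M.
      {\<omega>\<in>space M. ereal (r n) * X n \<omega> > ereal K} \<subseteq> E \<and> measure M E < \<epsilon>)"

end

theory Submission
  imports Defs
begin
definition btw :: "real \<Rightarrow> real \<Rightarrow> bool" where
  "btw a b \<longleftrightarrow> (0 \<le> a \<and> a \<le> b) \<or> (b \<le> a \<and> a \<le> 0)"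

lemma btw_refl: "btw a a" unfolding btw_def by auto
lemma btw_trans: "btw p q \<Longrightarrow> btw q r \<Longrightarrow> btw p r" unfolding btw_def by auto
lemma btw_comb:
  assumes "btw p1 d1" "btw p2 d2" "(0\<le>d1 \<and> 0\<le>d2) \<or> (d1\<le>0 \<and> d2\<le>0)" "0\<le>a" "0\<le>b"
  shows "btw (a*p1 + b*p2) (a*d1 + b*d2)"
  using assms unfolding btw_def
  by (smt (verit) mult_left_mono mult_nonneg_nonneg mult_nonneg_nonpos)

lemma shrink:
  fixes d w :: "real^'d"
  assumes sup: "\<forall>i. d$i=0 \<longrightarrow> w$i=0" and ex: "\<exists>i. w$i*d$i>0"
  shows "\<exists>s>0. card{i. (d - s*\<^sub>R w)$i \<noteq> 0} < card{i. d$i\<noteq>0}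
     \<and> (\<forall>i. 0 \<le> w$i*d$i \<longrightarrow> btw ((d - s*\<^sub>R w)$i) (d$i))
     \<and> (\<forall>i. w$i*d$i \<le> 0 \<longrightarrow> btw (d$i) ((d - s*\<^sub>R w)$i))"
proof -
  define I where "I = {i. w$i*d$i>0}"
  have fI: "finite I" "I \<noteq> {}" using ex by (auto simp: I_def)
  define s where "s = Min ((\<lambda>i. d$i/w$i) ` I)"
  have pos: "d$i/w$i > 0" if "i \<in> I" for i
    using that by (auto simp: I_def zero_less_mult_iff zero_less_divide_iff)
  have "s \<in> (\<lambda>i. d$i/w$i) ` I"
    using Min_in[of "(\<lambda>i. d$i/w$i) ` I"] fI unfolding s_def by blast
  then obtain k where k: "k \<in> I" "s = d$k/w$k" by blast
  have spos: "s > 0" using pos k by auto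
  have sle: "s \<le> d$i/w$i" if "i \<in> I" for i
    unfolding s_def using fI that by auto
  have wk: "w$k \<noteq> 0" using k by (auto simp: I_def)
  have zk: "(d - s*\<^sub>R w)$k = 0" using k wk by simp
  have dk: "d$k \<noteq> 0" using k by (auto simp: I_def)
  have sub: "{i. (d - s*\<^sub>R w)$i \<noteq> 0} \<subseteq> {i. d$i\<noteq>0} - {k}"
    using zk sup by auto
  have card: "card{i. (d - s*\<^sub>R w)$i \<noteq> 0} < card{i. d$i\<noteq>0}"
  proof -
    have "card ({i. d$i\<noteq>0} - {k}) < card{i. d$i\<noteq>0}"
      using dk by (intro card_Diff1_less) auto
    then show ?thesis using card_mono[OF _ sub] by (meson finite le_less_trans)
  qed
  have b1: "btw ((d - s*\<^sub>R w)$i) (d$i)" if "0 \<le> w$i*d$i" for i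
  proof (cases "i \<in> I")
    case True
    have l: "s \<le> d$i/w$i" using sle True .
    have wi: "w$i \<noteq> 0" using True by (auto simp: I_def)
    show ?thesis
    proof (cases "w$i > 0")
      case True
      then have "d$i > 0" using \<open>i\<in>I\<close> by (auto simp: I_def zero_less_mult_iff)
      moreover have "s * w$i \<le> d$i" using l True by (simp add: le_divide_eq)
      ultimately show ?thesis using spos True unfolding btw_def by simp
    next
      case False
      then have wn: "w$i < 0" using wi by simp
      then have "d$i < 0" using \<open>i\<in>I\<close> by (auto simp: I_def zero_less_mult_iff)
      moreover have "s * w$i \<ge> d$i" using l wn by (simp add: le_divide_eq_1 le_divide_eq)
      moreover have "s * w$i < 0" using spos wn by (simp add: mult_pos_neg)
      ultimately show ?thesis unfolding btw_def by simp
    qed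
  next
    case False
    then have "w$i = 0" using that sup by (auto simp: I_def)
    then show ?thesis by (simp add: btw_refl)
  qed
  have b2: "btw (d$i) ((d - s*\<^sub>R w)$i)" if "w$i*d$i \<le> 0" for i
  proof (cases "d$i > 0")
    case True
    then have "w$i \<le> 0" using that by (simp add: mult_le_0_iff)
    then show ?thesis using True spos unfolding btw_def by (simp add: mult_pos_neg mult_nonneg_nonpos)
  next
    case False
    show ?thesis
    proof (cases "d$i = 0")
      case True then show ?thesis using sup by (simp add: btw_refl)
    next
      case False
      then have "d$i < 0" using \<open>\<not> d$i > 0\<close> by simp
      then have "w$i \<ge> 0" using that by (simp add: mult_le_0_iff)
      then show ?thesis using \<open>d$i < 0\<close> spos unfolding btw_def by simp
    qed
  qed
  show ?thesis using spos card b1 b2 by blast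
qed

lemma base_bound:
  fixes f :: "real^'d \<Rightarrow> 'b::euclidean_space"
  assumes lf: "linear f"
  shows "\<exists>L\<ge>0. \<forall>d. (\<forall>v. (\<forall>i. d$i = 0 \<longrightarrow> v$i = 0) \<longrightarrow> f v = 0 \<longrightarrow> v = 0) \<longrightarrow> norm d \<le> L * norm (f d)"
proof -
  define S where "S J = {v::real^'d. \<forall>i. i \<notin> J \<longrightarrow> v$i = 0}" for J
  have sS: "subspace (S J)" for J unfolding S_def subspace_def by auto
  have cS: "closed (S J)" for J using sS closed_subspace by blast
  have bl: "bounded_linear f" using lf linear_conv_bounded_linear by blast
  have "\<exists>l\<ge>0. (\<forall>v\<in>S J. f v = 0 \<longrightarrow> v = 0) \<longrightarrow> (\<forall>v\<in>S J. norm v \<le> l * norm (f v))" for J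
  proof (cases "\<forall>v\<in>S J. f v = 0 \<longrightarrow> v = 0")
    case True
    then obtain e where e: "e > 0" "\<forall>x\<in>S J. norm (f x) \<ge> e * norm x"
      using injective_imp_isometric[OF cS sS bl] by blast
    have "\<forall>v\<in>S J. norm v \<le> (1/e) * norm (f v)"
      using e by (auto simp: field_simps mult.commute)
    then show ?thesis using e by (intro exI[of _ "1/e"]) auto
  qed auto
  then obtain l where l: "\<And>J. l J \<ge> 0" "\<And>J. (\<forall>v\<in>S J. f v = 0 \<longrightarrow> v = 0) \<longrightarrow> (\<forall>v\<in>S J. norm v \<le> l J * norm (f v))"
    by metis
  define L where "L = (\<Sum>J\<in>UNIV. l J)"
  have lL: "l J \<le> L" for J unfolding L_def by (rule member_le_sum) (auto intro: l)
  have L0: "L \<ge> 0" unfolding L_def by (intro sum_nonneg) (auto intro: l)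
  show ?thesis
  proof (intro exI[of _ L] conjI allI impI L0)
    fix d :: "real^'d"
    assume h: "\<forall>v. (\<forall>i. d$i = 0 \<longrightarrow> v$i = 0) \<longrightarrow> f v = 0 \<longrightarrow> v = 0"
    define J where "J = {i. d$i \<noteq> 0}"
    have "\<forall>v\<in>S J. f v = 0 \<longrightarrow> v = 0" using h unfolding S_def J_def by auto
    moreover have "d \<in> S J" unfolding S_def J_def by auto
    ultimately have "norm d \<le> l J * norm (f d)" using l(2) by blast
    also have "\<dots> \<le> L * norm (f d)" using lL by (intro mult_right_mono) auto
    finally show "norm d \<le> L * norm (f d)" .
  qed
qed

lemma conformal:
  fixes f :: "real^'d \<Rightarrow> 'b::real_normed_vector"
  assumes lf: "linear f"
    and base: "\<forall>d. (\<forall>v. (\<forall>i. d$i = 0 \<longrightarrow> v$i = 0) \<longrightarrow> f v = 0 \<longrightarrow> v = 0) \<longrightarrow> norm d \<le> L * norm (f d)"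
    and L0: "L \<ge> 0"
  shows "\<exists>p. f p = f d \<and> (\<forall>i. btw (p$i) (d$i)) \<and> norm p \<le> L * norm (f d)"
proof (induction "card {i. d$i \<noteq> 0}" arbitrary: d rule: less_induct)
  case less
  show ?case
  proof (cases "\<exists>v. (\<forall>i. d$i = 0 \<longrightarrow> v$i = 0) \<and> f v = 0 \<and> v \<noteq> 0")
    case False
    then have "norm d \<le> L * norm (f d)" using base by blast
    then show ?thesis by (intro exI[of _ d]) (auto simp: btw_refl)
  next
    case True
    then obtain w where w: "\<forall>i. d$i = 0 \<longrightarrow> w$i = 0" "f w = 0" "w \<noteq> 0" by blast
    have "\<exists>i. w$i * d$i \<noteq> 0"
    proof (rule ccontr)
      assume "\<not> ?thesis"
      then have "w = 0" using w(1) by (auto simp: vec_eq_iff)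
      then show False using w(3) by simp
    qed
    then obtain u where u: "\<forall>i. d$i = 0 \<longrightarrow> u$i = 0" "f u = 0" "\<exists>i. u$i * d$i > 0"
    proof -
      assume r: "\<And>u. \<forall>i. d$i = 0 \<longrightarrow> u$i = 0 \<Longrightarrow> f u = 0 \<Longrightarrow> \<exists>i. u$i * d$i > 0 \<Longrightarrow> thesis"
      show thesis
      proof (cases "\<exists>i. w$i * d$i > 0")
        case True then show ?thesis using r w by blast
      next
        case False
        then obtain i where "w$i * d$i < 0" using \<open>\<exists>i. w$i * d$i \<noteq> 0\<close>
          by (meson linorder_neqE_linordered_idom)
        then show ?thesis using r[of "-w"] w linear_neg[OF lf] by auto
      qed
    qed
    obtain s where s: "s > 0" "card{i. (d - s*\<^sub>R u)$i \<noteq> 0} < card{i. d$i\<noteq>0}"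
      "\<forall>i. 0 \<le> u$i*d$i \<longrightarrow> btw ((d - s*\<^sub>R u)$i) (d$i)"
      "\<forall>i. u$i*d$i \<le> 0 \<longrightarrow> btw (d$i) ((d - s*\<^sub>R u)$i)"
      using shrink[OF u(1) u(3)] by blast
    define d1 where "d1 = d - s*\<^sub>R u"
    have fd1: "f d1 = f d" unfolding d1_def using u(2) lf by (simp add: linear_diff linear_scale)
    obtain p1 where p1: "f p1 = f d1" "\<forall>i. btw (p1$i) (d1$i)" "norm p1 \<le> L * norm (f d1)"
      using less[of d1] s(2) unfolding d1_def by blast
    show ?thesis
    proof (cases "\<exists>i. u$i * d$i < 0")
      case False
      then have "\<forall>i. btw (d1$i) (d$i)" using s(3) unfolding d1_def by (simp add: not_less)
      then show ?thesis using p1 fd1 btw_trans by metis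
    next
      case True
      have u': "\<forall>i. d$i = 0 \<longrightarrow> (-u)$i = 0" "\<exists>i. (-u)$i * d$i > 0" using u(1) True by auto
      obtain s' where s': "s' > 0" "card{i. (d - s'*\<^sub>R (-u))$i \<noteq> 0} < card{i. d$i\<noteq>0}"
        "\<forall>i. 0 \<le> (-u)$i*d$i \<longrightarrow> btw ((d - s'*\<^sub>R (-u))$i) (d$i)"
        "\<forall>i. (-u)$i*d$i \<le> 0 \<longrightarrow> btw (d$i) ((d - s'*\<^sub>R (-u))$i)"
        using shrink[OF u'] by blast
      define d2 where "d2 = d - s'*\<^sub>R (-u)"
      have fd2: "f d2 = f d" unfolding d2_def using u(2) lf by (simp add: linear_add linear_scale linear_neg)
      obtain p2 where p2: "f p2 = f d2" "\<forall>i. btw (p2$i) (d2$i)" "norm p2 \<le> L * norm (f d2)"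
        using less[of d2] s'(2) unfolding d2_def by blast
      define a where "a = s'/(s+s')"
      define b where "b = s/(s+s')"
      have ab: "a \<ge> 0" "b \<ge> 0" "a + b = 1" using s(1) s'(1) unfolding a_def b_def
        by (simp_all add: add_divide_distrib[symmetric])
      have dd: "a *\<^sub>R d1 + b *\<^sub>R d2 = d"
      proof -
        have "a * s = b * s'" unfolding a_def b_def by simp
        then have "a *\<^sub>R d1 + b *\<^sub>R d2 = (a+b) *\<^sub>R d + (b * s' - a * s) *\<^sub>R u"
          unfolding d1_def d2_def by (simp add: algebra_simps)
        then show ?thesis using \<open>a * s = b * s'\<close> ab(3) by simp
      qed
      define p where "p = a *\<^sub>R p1 + b *\<^sub>R p2"
      have "f p = a *\<^sub>R f d + b *\<^sub>R f d" unfolding p_def using p1 p2 fd1 fd2 lf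
        by (simp add: linear_add linear_scale)
      also have "\<dots> = f d" using ab(3) by (metis scaleR_add_left scaleR_one)
      finally have fp: "f p = f d" .
      have "norm p \<le> norm (a *\<^sub>R p1) + norm (b *\<^sub>R p2)" unfolding p_def by (rule norm_triangle_ineq)
      also have "\<dots> = a * norm p1 + b * norm p2" using ab by simp
      also have "\<dots> \<le> a * (L * norm (f d)) + b * (L * norm (f d))"
        using p1(3) p2(3) fd1 fd2 ab by (intro add_mono mult_left_mono) auto
      also have "\<dots> = L * norm (f d)" using ab(3) by (metis distrib_right mult_1)
      finally have np: "norm p \<le> L * norm (f d)" .
      have "btw (p$i) (d$i)" for i
      proof -
        have sg: "(0\<le>d1$i \<and> 0\<le>d2$i) \<or> (d1$i\<le>0 \<and> d2$i\<le>0)"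
        proof (cases "0 \<le> u$i * d$i")
          case True
          then have "btw (d1$i) (d$i)" "btw (d$i) (d2$i)" using s(3) s'(4) unfolding d1_def d2_def by auto
          then show ?thesis unfolding btw_def by auto
        next
          case False
          then have "btw (d$i) (d1$i)" "btw (d2$i) (d$i)" using s(4) s'(3) unfolding d1_def d2_def by auto
          then show ?thesis unfolding btw_def by auto
        qed
        have "btw (a * p1$i + b * p2$i) (a * d1$i + b * d2$i)"
          using btw_comb[OF _ _ sg ab(1) ab(2)] p1(2) p2(2) by blast
        moreover have "(a *\<^sub>R d1 + b *\<^sub>R d2)$i = d$i" using dd by simp
        then have "a * d1$i + b * d2$i = d$i" by simp
        ultimately show ?thesis unfolding p_def by simp
      qed
      then show ?thesis using fp np by blast
    qed
  qed
qed

lemma feas_lip: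
  fixes f :: "real^'d \<Rightarrow> 'b::euclidean_space"
  assumes lf: "linear f"
  shows "\<exists>L\<ge>0. \<forall>x z. (\<forall>i. 0 \<le> x$i) \<longrightarrow> (\<forall>i. 0 \<le> z$i) \<longrightarrow>
     (\<exists>x'. f x' = f z \<and> (\<forall>i. 0 \<le> x'$i) \<and> norm (x' - x) \<le> L * norm (f z - f x))"
proof -
  obtain L where L: "L \<ge> 0" "\<forall>d. (\<forall>v. (\<forall>i. d$i = 0 \<longrightarrow> v$i = 0) \<longrightarrow> f v = 0 \<longrightarrow> v = 0) \<longrightarrow> norm d \<le> L * norm (f d)"
    using base_bound[OF lf] by blast
  show ?thesis
  proof (intro exI[of _ L] conjI allI impI L(1))
    fix x z :: "real^'d"
    assume x: "\<forall>i. 0 \<le> x$i" and z: "\<forall>i. 0 \<le> z$i"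
    obtain p where p: "f p = f (z - x)" "\<forall>i. btw (p$i) ((z - x)$i)" "norm p \<le> L * norm (f (z - x))"
      using conformal[OF lf L(2) L(1)] by blast
    have fzx: "f (z - x) = f z - f x" using lf by (simp add: linear_diff)
    have "f (x + p) = f z" using p(1) fzx lf by (simp add: linear_add)
    moreover have "0 \<le> (x + p)$i" for i
      using p(2) x z unfolding btw_def by (smt (verit) vector_add_component vector_minus_component)
    moreover have "norm ((x + p) - x) \<le> L * norm (f z - f x)" using p(3) fzx by simp
    ultimately show "\<exists>x'. f x' = f z \<and> (\<forall>i. 0 \<le> x'$i) \<and> norm (x' - x) \<le> L * norm (f z - f x)"
      by blast
  qed
qed

lemma opt_lip:
  fixes A :: "real^'d^'m" and b :: "real^'m" and c :: "real^'d"
  assumes ne: "OPT A c b \<noteq> {}"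
  shows "\<exists>C\<ge>0. \<forall>\<beta>. OPT A c \<beta> \<noteq> {} \<longrightarrow>
     (\<forall>x\<in>OPT A c \<beta>. \<exists>y\<in>OPT A c b. dist x y \<le> C * norm (\<beta> - b)) \<and>
     (\<forall>y\<in>OPT A c b. \<exists>x\<in>OPT A c \<beta>. dist y x \<le> C * norm (\<beta> - b))"
proof -
  obtain L1 where L1: "L1 \<ge> 0" "\<forall>x z. (\<forall>i. 0 \<le> x$i) \<longrightarrow> (\<forall>i. 0 \<le> z$i) \<longrightarrow>
     (\<exists>x'. A *v x' = A *v z \<and> (\<forall>i. 0 \<le> x'$i) \<and> norm (x' - x) \<le> L1 * norm (A *v z - A *v x))"
    using feas_lip[of "\<lambda>x. A *v x"] by auto
  define g where "g x = (A *v x, c \<bullet> x)" for x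
  have lg: "linear g" unfolding g_def
    by (rule linearI) (simp_all add: linear_add[OF matrix_vector_mul_linear] linear_scale[OF matrix_vector_mul_linear] inner_add_right)
  obtain L2 where L2: "L2 \<ge> 0" "\<forall>x z. (\<forall>i. 0 \<le> x$i) \<longrightarrow> (\<forall>i. 0 \<le> z$i) \<longrightarrow>
     (\<exists>x'. g x' = g z \<and> (\<forall>i. 0 \<le> x'$i) \<and> norm (x' - x) \<le> L2 * norm (g z - g x))"
    using feas_lip[OF lg] by blast
  have val: "\<bar>c \<bullet> x - c \<bullet> y\<bar> \<le> norm c * L1 * norm (\<beta> - b)"
    if x: "x \<in> OPT A c \<beta>" and y: "y \<in> OPT A c b" for x y \<beta>
  proof -
    have xf: "A *v x = \<beta>" "\<forall>i. 0 \<le> x$i" and xo: "\<forall>y. A *v y = \<beta> \<and> (\<forall>i. 0 \<le> y$i) \<longrightarrow> c \<bullet> x \<le> c \<bullet> y"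
      using x unfolding OPT_def by auto
    have yf: "A *v y = b" "\<forall>i. 0 \<le> y$i" and yo: "\<forall>z. A *v z = b \<and> (\<forall>i. 0 \<le> z$i) \<longrightarrow> c \<bullet> y \<le> c \<bullet> z"
      using y unfolding OPT_def by auto
    obtain y' where y': "A *v y' = b" "\<forall>i. 0 \<le> y'$i" "norm (y' - x) \<le> L1 * norm (b - \<beta>)"
      using L1(2) xf yf by metis
    obtain x' where x': "A *v x' = \<beta>" "\<forall>i. 0 \<le> x'$i" "norm (x' - y) \<le> L1 * norm (\<beta> - b)"
      using L1(2) xf yf by metis
    have nb: "norm (b - \<beta>) = norm (\<beta> - b)" by (rule norm_minus_commute)
    have "c \<bullet> y \<le> c \<bullet> y'" using yo y' by blast
    also have "\<dots> = c \<bullet> x + c \<bullet> (y' - x)" by (simp add: inner_diff_right)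
    also have "\<dots> \<le> c \<bullet> x + norm c * norm (y' - x)" using norm_cauchy_schwarz by simp
    also have "\<dots> \<le> c \<bullet> x + norm c * (L1 * norm (\<beta> - b))"
      using y'(3) nb by (simp add: mult_left_mono)
    finally have 1: "c \<bullet> y \<le> c \<bullet> x + norm c * L1 * norm (\<beta> - b)" by simp
    have "c \<bullet> x \<le> c \<bullet> x'" using xo x' by blast
    also have "\<dots> = c \<bullet> y + c \<bullet> (x' - y)" by (simp add: inner_diff_right)
    also have "\<dots> \<le> c \<bullet> y + norm c * norm (x' - y)" using norm_cauchy_schwarz by simp
    also have "\<dots> \<le> c \<bullet> y + norm c * (L1 * norm (\<beta> - b))"
      using x'(3) by (simp add: mult_left_mono)
    finally have 2: "c \<bullet> x \<le> c \<bullet> y + norm c * L1 * norm (\<beta> - b)" by simp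
    show ?thesis using 1 2 by linarith
  qed
  define C where "C = L2 * (1 + norm c * L1)"
  have C0: "C \<ge> 0" unfolding C_def using L1 L2 by simp
  have gb: "norm (g y - g x) \<le> (1 + norm c * L1) * norm (\<beta> - b)"
    if x: "x \<in> OPT A c \<beta>" and y: "y \<in> OPT A c b" for x y \<beta>
  proof -
    have "A *v x = \<beta>" "A *v y = b" using x y unfolding OPT_def by auto
    then have "g y - g x = (b - \<beta>, c \<bullet> y - c \<bullet> x)" unfolding g_def by simp
    then have "norm (g y - g x) \<le> norm (b - \<beta>) + norm (c \<bullet> y - c \<bullet> x)"
      using norm_Pair_le by metis
    also have "\<dots> \<le> norm (\<beta> - b) + norm c * L1 * norm (\<beta> - b)"
      using val[OF x y] by (simp add: norm_minus_commute abs_minus_commute)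
    finally show ?thesis by (simp add: algebra_simps)
  qed
  have gb': "norm (g x - g y) \<le> (1 + norm c * L1) * norm (\<beta> - b)"
    if x: "x \<in> OPT A c \<beta>" and y: "y \<in> OPT A c b" for x y \<beta>
    using gb[OF x y] by (simp add: norm_minus_commute)
  have inOPT: "x' \<in> OPT A c \<gamma>" if "g x' = g z" "\<forall>i. 0 \<le> x'$i" "z \<in> OPT A c \<gamma>" for x' z \<gamma>
    using that unfolding OPT_def g_def by auto
  show ?thesis
  proof (intro exI[of _ C] conjI C0 allI impI ballI)
    fix \<beta> x assume "OPT A c \<beta> \<noteq> {}" and x: "x \<in> OPT A c \<beta>"
    obtain y0 where y0: "y0 \<in> OPT A c b" using ne by blast
    obtain x' where x': "g x' = g y0" "\<forall>i. 0 \<le> x'$i" "norm (x' - x) \<le> L2 * norm (g y0 - g x)"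
      using L2(2) x y0 unfolding OPT_def by blast
    have "dist x x' = norm (x' - x)" by (simp add: dist_norm norm_minus_commute)
    also have "\<dots> \<le> L2 * ((1 + norm c * L1) * norm (\<beta> - b))"
      using x'(3) gb[OF x y0] L2(1) by (meson mult_left_mono order_trans)
    finally show "\<exists>y\<in>OPT A c b. dist x y \<le> C * norm (\<beta> - b)"
      using inOPT[OF x'(1,2) y0] unfolding C_def by (auto simp: mult.assoc)
  next
    fix \<beta> y assume "OPT A c \<beta> \<noteq> {}" and y: "y \<in> OPT A c b"
    then obtain x0 where x0: "x0 \<in> OPT A c \<beta>" by blast
    obtain y' where y': "g y' = g x0" "\<forall>i. 0 \<le> y'$i" "norm (y' - y) \<le> L2 * norm (g x0 - g y)"
      using L2(2) x0 y unfolding OPT_def by blast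
    have "dist y y' = norm (y' - y)" by (simp add: dist_norm norm_minus_commute)
    also have "\<dots> \<le> L2 * ((1 + norm c * L1) * norm (\<beta> - b))"
      using y'(3) gb'[OF x0 y] L2(1) by (meson mult_left_mono order_trans)
    finally show "\<exists>x\<in>OPT A c \<beta>. dist y x \<le> C * norm (\<beta> - b)"
      using inOPT[OF y'(1,2) x0] unfolding C_def by (auto simp: mult.assoc)
  qed
qed

lemma hd_le:
  assumes "\<forall>x\<in>S. \<exists>y\<in>T. dist x y \<le> e" "\<forall>y\<in>T. \<exists>x\<in>S. dist y x \<le> e"
  shows "hausdorff_dist S T \<le> ereal e"
proof -
  have 1: "(SUP x\<in>S. INF y\<in>T. ereal (dist x y)) \<le> ereal e"
  proof (rule SUP_least)
    fix x assume "x \<in> S"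
    then obtain y where "y \<in> T" "dist x y \<le> e" using assms(1) by blast
    then show "(INF y\<in>T. ereal (dist x y)) \<le> ereal e" by (intro INF_lower2) auto
  qed
  have 2: "(SUP x\<in>T. INF y\<in>S. ereal (dist x y)) \<le> ereal e"
  proof (rule SUP_least)
    fix x assume "x \<in> T"
    then obtain y where "y \<in> S" "dist x y \<le> e" using assms(2) by blast
    then show "(INF y\<in>S. ereal (dist x y)) \<le> ereal e" by (intro INF_lower2) auto
  qed
  show ?thesis unfolding hausdorff_dist_def using 1 2 by simp
qed

theorem theorem3p4:
  fixes M :: "'w measure"
    and A :: "real^'d^'m" and b :: "real^'m" and c :: "real^'d"
    and bn :: "nat \<Rightarrow> 'w \<Rightarrow> real^'m" and r :: "nat \<Rightarrow> real"
  assumes "prob_space M"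
    and "rank A = CARD('m)" and "CARD('m) \<le> CARD('d)"
    and A1: "OPT A c b \<noteq> {}" "bounded (OPT A c b)"
    and B2: "\<exists>E. (\<forall>n. E n \<in> sets M \<and> E n \<subseteq> {\<omega>\<in>space M. OPT A c (bn n \<omega>) \<noteq> {}})
                  \<and> (\<lambda>n. measure M (E n)) \<longlonglongrightarrow> 1"
    and "\<And>n. bn n \<in> borel_measurable M"
    and "filterlim r at_top sequentially"
    and "bigO_P M (\<lambda>n \<omega>. ereal (norm (bn n \<omega> - b))) r"
  shows "bigO_P M (\<lambda>n \<omega>. hausdorff_dist (OPT A c (bn n \<omega>)) (OPT A c b)) r"
proof -
  interpret P: prob_space M by fact
  obtain C where C: "C \<ge> 0" "\<forall>\<beta>. OPT A c \<beta> \<noteq> {} \<longrightarrow>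
     (\<forall>x\<in>OPT A c \<beta>. \<exists>y\<in>OPT A c b. dist x y \<le> C * norm (\<beta> - b)) \<and>
     (\<forall>y\<in>OPT A c b. \<exists>x\<in>OPT A c \<beta>. dist y x \<le> C * norm (\<beta> - b))"
    using opt_lip[OF A1(1)] by blast
  have hd: "hausdorff_dist (OPT A c \<beta>) (OPT A c b) \<le> ereal (C * norm (\<beta> - b))"
    if "OPT A c \<beta> \<noteq> {}" for \<beta>
    using C(2) that by (intro hd_le) auto
  obtain E' where E': "\<And>n. E' n \<in> sets M" "\<And>n. E' n \<subseteq> {\<omega>\<in>space M. OPT A c (bn n \<omega>) \<noteq> {}}"
    "(\<lambda>n. measure M (E' n)) \<longlonglongrightarrow> 1"
    using B2 by blast
  show ?thesis unfolding bigO_P_def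
  proof (intro allI impI)
    fix \<epsilon> :: real assume \<epsilon>: "\<epsilon> > 0"
    obtain K N1 where KN: "\<forall>n\<ge>N1. \<exists>E\<in>sets M.
      {\<omega>\<in>space M. ereal (r n) * ereal (norm (bn n \<omega> - b)) > ereal K} \<subseteq> E \<and> measure M E < \<epsilon>/2"
      using assms(9) \<epsilon> unfolding bigO_P_def by (meson half_gt_zero)
    have "eventually (\<lambda>n. 1 - \<epsilon>/2 < measure M (E' n)) sequentially"
      using order_tendstoD(1)[OF E'(3)] \<epsilon> by simp
    then obtain N2 where N2: "\<And>n. n \<ge> N2 \<Longrightarrow> 1 - \<epsilon>/2 < measure M (E' n)"
      unfolding eventually_sequentially by blast
    have "eventually (\<lambda>n. 1 \<le> r n) sequentially"
      using assms(8) unfolding filterlim_at_top by blast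
    then obtain N3 where N3: "\<And>n. n \<ge> N3 \<Longrightarrow> 1 \<le> r n"
      unfolding eventually_sequentially by blast
    define K' where "K' = C * max K 0"
    show "\<exists>K::real. \<exists>N. \<forall>n\<ge>N. \<exists>E\<in>sets M.
      {\<omega>\<in>space M. ereal (r n) * hausdorff_dist (OPT A c (bn n \<omega>)) (OPT A c b) > ereal K} \<subseteq> E
        \<and> measure M E < \<epsilon>"
    proof (intro exI[of _ K'] exI[of _ "max N1 (max N2 N3)"] allI impI)
      fix n assume n: "max N1 (max N2 N3) \<le> n"
      obtain E1 where E1: "E1 \<in> sets M"
        "{\<omega>\<in>space M. ereal (r n) * ereal (norm (bn n \<omega> - b)) > ereal K} \<subseteq> E1" "measure M E1 < \<epsilon>/2"
        using KN n by auto
      have rn: "r n > 0" using N3[of n] n by simp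
      have m2: "1 - \<epsilon>/2 < measure M (E' n)" using N2[of n] n by simp
      define E where "E = E1 \<union> (space M - E' n)"
      have Es: "E \<in> sets M" unfolding E_def using E1(1) E'(1) by auto
      have sub: "{\<omega>\<in>space M. ereal (r n) * hausdorff_dist (OPT A c (bn n \<omega>)) (OPT A c b) > ereal K'} \<subseteq> E"
      proof
        fix \<omega> assume w: "\<omega> \<in> {\<omega>\<in>space M. ereal (r n) * hausdorff_dist (OPT A c (bn n \<omega>)) (OPT A c b) > ereal K'}"
        show "\<omega> \<in> E"
        proof (rule ccontr)
          assume "\<omega> \<notin> E"
          then have w1: "\<omega> \<notin> E1" and w2: "\<omega> \<in> E' n" using w unfolding E_def by auto
          have ne: "OPT A c (bn n \<omega>) \<noteq> {}" using w2 E'(2) by blast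
          define nb where "nb = norm (bn n \<omega> - b)"
          have "\<not> ereal (r n) * ereal nb > ereal K" using w1 w E1(2) unfolding nb_def by blast
          then have rk: "r n * nb \<le> K" by simp
          have "ereal (r n) * hausdorff_dist (OPT A c (bn n \<omega>)) (OPT A c b) \<le> ereal (r n) * ereal (C * nb)"
            using hd[OF ne] rn unfolding nb_def by (intro ereal_mult_left_mono) auto
          also have "\<dots> = ereal (C * (r n * nb))" by (simp add: algebra_simps)
          also have "\<dots> \<le> ereal K'" unfolding K'_def using rk C(1)
            by (simp add: mult_left_mono)
          finally show False using w by (simp add: not_less[symmetric])
        qed
      qed
      have "measure M E \<le> measure M E1 + measure M (space M - E' n)"
        unfolding E_def using E1(1) E'(1) by (intro measure_Un_le) auto
      also have "\<dots> = measure M E1 + (1 - measure M (E' n))" using P.prob_compl[OF E'(1)] by simp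
      also have "\<dots> < \<epsilon>" using E1(3) m2 by simp
      finally show "\<exists>E\<in>sets M. {\<omega>\<in>space M. ereal (r n) * hausdorff_dist (OPT A c (bn n \<omega>)) (OPT A c b) > ereal K'} \<subseteq> E
        \<and> measure M E < \<epsilon>" using Es sub by blast
    qed
  qed
qed

end
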